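(* Let $\mathcal{C}$ be a category with finite coproducts and let $\mathbf{Mon}(\mathcal{C})$ be the category of monads on $\mathcal{C}$ and monad morphisms. The assignment sending a monad $M$ to its semifree monad $M^{\mathrm{s}}$ and a monad morphism $\sigma:M\Rightarrow T$ to $\sigma^{\mathrm{s}}$ with components $\sigma^{\mathrm{s}}_X=\mathrm{id}_X+\sigma_X: X+MX\to X+TX$ is a functor $(-)^{\mathrm{s}}:\mathbf{Mon}(\mathcal{C})\to\mathbf{Mon}(\mathcal{C})$ (in particular, $\sigma^{\mathrm{s}}$ is a monad morphism $M^{\mathrm{s}}\Rightarrow T^{\mathrm{s}}$).
   Context: For a monad $(M,\eta,\mu)$ on a category with finite coproducts, the semifree monad is $M^{\mathrm{s}}=\mathrm{Id}+M$ with unit $\eta^{\mathrm{s}}=\mathrm{inl}$ and multiplication $\mu^{\mathrm{s}}=[\mathrm{id}_{\mathrm{Id}+M},\ \mathrm{inr}\circ\mu\circ M[\eta,\mathrm{id}_M]]$, where $[f,g]$ denotes copairing. A monad morphism $\sigma:M\Rightarrow T$ is a natural transformation with $\sigma\circ\eta^M=\eta^T$ and $\sigma\circ\mu^M=\mu^T\circ\sigma_T\circ M\sigma$. *)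

theory Defs
  imports Main
begin

record ('o,'m) category_data =
  obj  :: "'o set"
  arr  :: "'m set"
  dom  :: "'m \<Rightarrow> 'o"
  cod  :: "'m \<Rightarrow> 'o"
  idm  :: "'o \<Rightarrow> 'm"
  comp :: "'m \<Rightarrow> 'm \<Rightarrow> 'm"   (* comp C g f = g \<circ> f *)

definition hom :: "('o,'m) category_data \<Rightarrow> 'o \<Rightarrow> 'o \<Rightarrow> 'm set" where
  "hom C A B = {f \<in> arr C. dom C f = A \<and> cod C f = B}"

definition is_category :: "('o,'m) category_data \<Rightarrow> bool" where
  "is_category C \<longleftrightarrow>
     (\<forall>f\<in>arr C. dom C f \<in> obj C \<and> cod C f \<in> obj C)
   \<and> (\<forall>A\<in>obj C. idm C A \<in> hom C A A)
   \<and> (\<forall>f\<in>arr C. \<forall>g\<in>arr C. cod C f = dom C g \<longrightarrow>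
        comp C g f \<in> hom C (dom C f) (cod C g))
   \<and> (\<forall>f\<in>arr C. comp C f (idm C (dom C f)) = f \<and> comp C (idm C (cod C f)) f = f)
   \<and> (\<forall>f\<in>arr C. \<forall>g\<in>arr C. \<forall>h\<in>arr C. cod C f = dom C g \<longrightarrow> cod C g = dom C h \<longrightarrow>
        comp C h (comp C g f) = comp C (comp C h g) f)"

definition is_coproduct ::
  "('o,'m) category_data \<Rightarrow> 'o \<Rightarrow> 'o \<Rightarrow> 'o \<Rightarrow> 'm \<Rightarrow> 'm \<Rightarrow> bool" where
  "is_coproduct C A B S i j \<longleftrightarrow>
     S \<in> obj C \<and> i \<in> hom C A S \<and> j \<in> hom C B S
   \<and> (\<forall>Z\<in>obj C. \<forall>f\<in>hom C A Z. \<forall>g\<in>hom C B Z.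
        \<exists>!h. h \<in> hom C S Z \<and> comp C h i = f \<and> comp C h j = g)"

definition is_initial :: "('o,'m) category_data \<Rightarrow> 'o \<Rightarrow> bool" where
  "is_initial C I \<longleftrightarrow> I \<in> obj C \<and> (\<forall>Z\<in>obj C. \<exists>!h. h \<in> hom C I Z)"

record ('o,'m) coproduct_choice =
  cp   :: "'o \<Rightarrow> 'o \<Rightarrow> 'o"
  cinl :: "'o \<Rightarrow> 'o \<Rightarrow> 'm"
  cinr :: "'o \<Rightarrow> 'o \<Rightarrow> 'm"

definition is_coproduct_choice ::
  "('o,'m) category_data \<Rightarrow> ('o,'m) coproduct_choice \<Rightarrow> bool" where
  "is_coproduct_choice C K \<longleftrightarrow>
     (\<forall>A\<in>obj C. \<forall>B\<in>obj C. is_coproduct C A B (cp K A B) (cinl K A B) (cinr K A B))"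

definition copair ::
  "('o,'m) category_data \<Rightarrow> ('o,'m) coproduct_choice \<Rightarrow> 'm \<Rightarrow> 'm \<Rightarrow> 'm" where
  "copair C K f g = (THE h. h \<in> hom C (cp K (dom C f) (dom C g)) (cod C f)
      \<and> comp C h (cinl K (dom C f) (dom C g)) = f
      \<and> comp C h (cinr K (dom C f) (dom C g)) = g)"

definition coprod_map ::
  "('o,'m) category_data \<Rightarrow> ('o,'m) coproduct_choice \<Rightarrow> 'm \<Rightarrow> 'm \<Rightarrow> 'm" where
  "coprod_map C K f g =
     copair C K (comp C (cinl K (cod C f) (cod C g)) f) (comp C (cinr K (cod C f) (cod C g)) g)"

definition is_endofunctor ::
  "('o,'m) category_data \<Rightarrow> ('o \<Rightarrow> 'o) \<Rightarrow> ('m \<Rightarrow> 'm) \<Rightarrow> bool" where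
  "is_endofunctor C Fo Fm \<longleftrightarrow>
     (\<forall>A\<in>obj C. Fo A \<in> obj C)
   \<and> (\<forall>f\<in>arr C. Fm f \<in> hom C (Fo (dom C f)) (Fo (cod C f)))
   \<and> (\<forall>A\<in>obj C. Fm (idm C A) = idm C (Fo A))
   \<and> (\<forall>f\<in>arr C. \<forall>g\<in>arr C. cod C f = dom C g \<longrightarrow> Fm (comp C g f) = comp C (Fm g) (Fm f))"

definition is_nat_trans ::
  "('o,'m) category_data \<Rightarrow> ('o \<Rightarrow> 'o) \<Rightarrow> ('m \<Rightarrow> 'm) \<Rightarrow> ('o \<Rightarrow> 'o) \<Rightarrow> ('m \<Rightarrow> 'm)
     \<Rightarrow> ('o \<Rightarrow> 'm) \<Rightarrow> bool" where
  "is_nat_trans C Fo Fm Go Gm \<alpha> \<longleftrightarrow>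
     (\<forall>A\<in>obj C. \<alpha> A \<in> hom C (Fo A) (Go A))
   \<and> (\<forall>f\<in>arr C. comp C (\<alpha> (cod C f)) (Fm f) = comp C (Gm f) (\<alpha> (dom C f)))"

record ('o,'m) monad_data =
  mo   :: "'o \<Rightarrow> 'o"
  mm   :: "'m \<Rightarrow> 'm"
  unit :: "'o \<Rightarrow> 'm"
  mult :: "'o \<Rightarrow> 'm"

definition is_monad :: "('o,'m) category_data \<Rightarrow> ('o,'m) monad_data \<Rightarrow> bool" where
  "is_monad C M \<longleftrightarrow>
     is_endofunctor C (mo M) (mm M)
   \<and> is_nat_trans C (\<lambda>A. A) (\<lambda>f. f) (mo M) (mm M) (unit M)
   \<and> is_nat_trans C (\<lambda>A. mo M (mo M A)) (\<lambda>f. mm M (mm M f)) (mo M) (mm M) (mult M)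
   \<and> (\<forall>A\<in>obj C. comp C (mult M A) (mm M (unit M A)) = idm C (mo M A))
   \<and> (\<forall>A\<in>obj C. comp C (mult M A) (unit M (mo M A)) = idm C (mo M A))
   \<and> (\<forall>A\<in>obj C. comp C (mult M A) (mm M (mult M A)) = comp C (mult M A) (mult M (mo M A)))"

definition is_monad_morphism ::
  "('o,'m) category_data \<Rightarrow> ('o,'m) monad_data \<Rightarrow> ('o,'m) monad_data \<Rightarrow> ('o \<Rightarrow> 'm) \<Rightarrow> bool" where
  "is_monad_morphism C M T \<sigma> \<longleftrightarrow>
     is_nat_trans C (mo M) (mm M) (mo T) (mm T) \<sigma>
   \<and> (\<forall>A\<in>obj C. comp C (\<sigma> A) (unit M A) = unit T A)
   \<and> (\<forall>A\<in>obj C. comp C (\<sigma> A) (mult M A)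
        = comp C (mult T A) (comp C (\<sigma> (mo T A)) (mm M (\<sigma> A))))"

definition id_mmor :: "('o,'m) category_data \<Rightarrow> ('o,'m) monad_data \<Rightarrow> 'o \<Rightarrow> 'm" where
  "id_mmor C M = (\<lambda>A. idm C (mo M A))"

definition comp_mmor ::
  "('o,'m) category_data \<Rightarrow> ('o \<Rightarrow> 'm) \<Rightarrow> ('o \<Rightarrow> 'm) \<Rightarrow> 'o \<Rightarrow> 'm" where
  "comp_mmor C \<tau> \<sigma> = (\<lambda>A. comp C (\<tau> A) (\<sigma> A))"

definition semifree ::
  "('o,'m) category_data \<Rightarrow> ('o,'m) coproduct_choice \<Rightarrow> ('o,'m) monad_data \<Rightarrow> ('o,'m) monad_data" where
  "semifree C K M =
    \<lparr> mo = (\<lambda>A. cp K A (mo M A)),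
      mm = (\<lambda>f. coprod_map C K f (mm M f)),
      unit = (\<lambda>A. cinl K A (mo M A)),
      mult = (\<lambda>A. copair C K
                (idm C (cp K A (mo M A)))
                (comp C (cinr K A (mo M A))
                   (comp C (mult M A)
                      (mm M (copair C K (unit M A) (idm C (mo M A))))))) \<rparr>"

definition semifree_mor ::
  "('o,'m) category_data \<Rightarrow> ('o,'m) coproduct_choice \<Rightarrow> ('o \<Rightarrow> 'm) \<Rightarrow> 'o \<Rightarrow> 'm" where
  "semifree_mor C K \<sigma> = (\<lambda>A. coprod_map C K (idm C A) (\<sigma> A))"

end

theory Submission
  imports Defs
begin

locale cc =
  fixes C :: "('o,'m) category_data" and K :: "('o,'m) coproduct_choice"
  assumes cat: "is_category C" and cop: "is_coproduct_choice C K"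
begin

abbreviation cmp (infixr "\<cdot>" 55) where "g \<cdot> f \<equiv> comp C g f"

lemma catD: "(\<forall>f\<in>arr C. dom C f \<in> obj C \<and> cod C f \<in> obj C)
   \<and> (\<forall>A\<in>obj C. idm C A \<in> hom C A A)
   \<and> (\<forall>f\<in>arr C. \<forall>g\<in>arr C. cod C f = dom C g \<longrightarrow>
        comp C g f \<in> hom C (dom C f) (cod C g))
   \<and> (\<forall>f\<in>arr C. comp C f (idm C (dom C f)) = f \<and> comp C (idm C (cod C f)) f = f)
   \<and> (\<forall>f\<in>arr C. \<forall>g\<in>arr C. \<forall>h\<in>arr C. cod C f = dom C g \<longrightarrow> cod C g = dom C h \<longrightarrow>
        comp C h (comp C g f) = comp C (comp C h g) f)"
  using cat unfolding is_category_def .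

lemma C1: "f \<in> arr C \<Longrightarrow> dom C f \<in> obj C \<and> cod C f \<in> obj C" using catD[THEN conjunct1, rule_format, of f] by simp
lemma C2: "A \<in> obj C \<Longrightarrow> idm C A \<in> arr C \<and> dom C (idm C A) = A \<and> cod C (idm C A) = A"
  using catD[THEN conjunct2, THEN conjunct1, rule_format, of A] unfolding hom_def by simp
lemma C3: "f \<in> arr C \<Longrightarrow> g \<in> arr C \<Longrightarrow> cod C f = dom C g \<Longrightarrow> g \<cdot> f \<in> arr C \<and> dom C (g \<cdot> f) = dom C f \<and> cod C (g \<cdot> f) = cod C g"
  using catD[THEN conjunct2, THEN conjunct2, THEN conjunct1, rule_format, of f g] unfolding hom_def by simp
lemma C4: "f \<in> arr C \<Longrightarrow> comp C f (idm C (dom C f)) = f \<and> comp C (idm C (cod C f)) f = f"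
  using catD[THEN conjunct2, THEN conjunct2, THEN conjunct2, THEN conjunct1, rule_format, of f] by simp
lemma C5: "f \<in> arr C \<Longrightarrow> g \<in> arr C \<Longrightarrow> h \<in> arr C \<Longrightarrow> cod C f = dom C g \<Longrightarrow> cod C g = dom C h
  \<Longrightarrow> comp C h (comp C g f) = comp C (comp C h g) f"
  using catD[THEN conjunct2, THEN conjunct2, THEN conjunct2, THEN conjunct2, rule_format, of f g h] by simp

lemma dom_obj[simp]: "f \<in> arr C \<Longrightarrow> dom C f \<in> obj C" using C1[of f] by simp
lemma cod_obj[simp]: "f \<in> arr C \<Longrightarrow> cod C f \<in> obj C" using C1[of f] by simp
lemma idm_arr[simp]: "A \<in> obj C \<Longrightarrow> idm C A \<in> arr C" using C2[of A] by simp
lemma idm_dom[simp]: "A \<in> obj C \<Longrightarrow> dom C (idm C A) = A" using C2[of A] by simp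
lemma idm_cod[simp]: "A \<in> obj C \<Longrightarrow> cod C (idm C A) = A" using C2[of A] by simp
lemma comp_arr[simp]: "f \<in> arr C \<Longrightarrow> g \<in> arr C \<Longrightarrow> cod C f = dom C g \<Longrightarrow> g \<cdot> f \<in> arr C" using C3[of f g] by simp
lemma comp_dom[simp]: "f \<in> arr C \<Longrightarrow> g \<in> arr C \<Longrightarrow> cod C f = dom C g \<Longrightarrow> dom C (g \<cdot> f) = dom C f" using C3[of f g] by simp
lemma comp_cod[simp]: "f \<in> arr C \<Longrightarrow> g \<in> arr C \<Longrightarrow> cod C f = dom C g \<Longrightarrow> cod C (g \<cdot> f) = cod C g" using C3[of f g] by simp
lemma id_l[simp]: "f \<in> arr C \<Longrightarrow> cod C f = A \<Longrightarrow> idm C A \<cdot> f = f" using C4[of f] by simp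
lemma id_r[simp]: "f \<in> arr C \<Longrightarrow> dom C f = A \<Longrightarrow> f \<cdot> idm C A = f" using C4[of f] by simp
lemma assoc[simp]: "f \<in> arr C \<Longrightarrow> g \<in> arr C \<Longrightarrow> h \<in> arr C \<Longrightarrow> cod C f = dom C g \<Longrightarrow> cod C g = dom C h
  \<Longrightarrow> (h \<cdot> g) \<cdot> f = h \<cdot> (g \<cdot> f)"
  using C5[of f g h] by simp

lemma cpr: "A \<in> obj C \<Longrightarrow> B \<in> obj C \<Longrightarrow> is_coproduct C A B (cp K A B) (cinl K A B) (cinr K A B)"
  using cop unfolding is_coproduct_choice_def by blast

lemma cp_obj[simp]: "A \<in> obj C \<Longrightarrow> B \<in> obj C \<Longrightarrow> cp K A B \<in> obj C"
  using cpr[of A B] unfolding is_coproduct_def by blast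
lemma inl_arr[simp]: "A \<in> obj C \<Longrightarrow> B \<in> obj C \<Longrightarrow> cinl K A B \<in> arr C"
  using cpr[of A B] unfolding is_coproduct_def hom_def by blast
lemma inl_dom[simp]: "A \<in> obj C \<Longrightarrow> B \<in> obj C \<Longrightarrow> dom C (cinl K A B) = A"
  using cpr[of A B] unfolding is_coproduct_def hom_def by blast
lemma inl_cod[simp]: "A \<in> obj C \<Longrightarrow> B \<in> obj C \<Longrightarrow> cod C (cinl K A B) = cp K A B"
  using cpr[of A B] unfolding is_coproduct_def hom_def by blast
lemma inr_arr[simp]: "A \<in> obj C \<Longrightarrow> B \<in> obj C \<Longrightarrow> cinr K A B \<in> arr C"
  using cpr[of A B] unfolding is_coproduct_def hom_def by blast
lemma inr_dom[simp]: "A \<in> obj C \<Longrightarrow> B \<in> obj C \<Longrightarrow> dom C (cinr K A B) = B"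
  using cpr[of A B] unfolding is_coproduct_def hom_def by blast
lemma inr_cod[simp]: "A \<in> obj C \<Longrightarrow> B \<in> obj C \<Longrightarrow> cod C (cinr K A B) = cp K A B"
  using cpr[of A B] unfolding is_coproduct_def hom_def by blast

lemma copair_prop:
  assumes "f \<in> arr C" "g \<in> arr C" "cod C f = cod C g"
  shows "copair C K f g \<in> hom C (cp K (dom C f) (dom C g)) (cod C f)
      \<and> copair C K f g \<cdot> cinl K (dom C f) (dom C g) = f
      \<and> copair C K f g \<cdot> cinr K (dom C f) (dom C g) = g"
proof -
  have "\<exists>!h. h \<in> hom C (cp K (dom C f) (dom C g)) (cod C f)
      \<and> h \<cdot> cinl K (dom C f) (dom C g) = f \<and> h \<cdot> cinr K (dom C f) (dom C g) = g"
    using cpr[of "dom C f" "dom C g"] assms unfolding is_coproduct_def hom_def by auto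
  thus ?thesis unfolding copair_def by (rule theI')
qed

lemma copair_arr[simp]: "f \<in> arr C \<Longrightarrow> g \<in> arr C \<Longrightarrow> cod C f = cod C g \<Longrightarrow> copair C K f g \<in> arr C"
  using copair_prop[of f g] unfolding hom_def by blast
lemma copair_dom[simp]: "f \<in> arr C \<Longrightarrow> g \<in> arr C \<Longrightarrow> cod C f = cod C g \<Longrightarrow> dom C (copair C K f g) = cp K (dom C f) (dom C g)"
  using copair_prop[of f g] unfolding hom_def by blast
lemma copair_cod[simp]: "f \<in> arr C \<Longrightarrow> g \<in> arr C \<Longrightarrow> cod C f = cod C g \<Longrightarrow> cod C (copair C K f g) = cod C f"
  using copair_prop[of f g] unfolding hom_def by blast
lemma copair_inl[simp]: "f \<in> arr C \<Longrightarrow> g \<in> arr C \<Longrightarrow> cod C f = cod C g \<Longrightarrow> dom C f = A \<Longrightarrow> dom C g = B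
  \<Longrightarrow> copair C K f g \<cdot> cinl K A B = f"
  using copair_prop[of f g] by blast
lemma copair_inr[simp]: "f \<in> arr C \<Longrightarrow> g \<in> arr C \<Longrightarrow> cod C f = cod C g \<Longrightarrow> dom C f = A \<Longrightarrow> dom C g = B
  \<Longrightarrow> copair C K f g \<cdot> cinr K A B = g"
  using copair_prop[of f g] by blast
lemma copair_inl'[simp]: "f \<in> arr C \<Longrightarrow> g \<in> arr C \<Longrightarrow> cod C f = cod C g \<Longrightarrow> dom C f = A \<Longrightarrow> dom C g = B
  \<Longrightarrow> h \<in> arr C \<Longrightarrow> cod C h = A \<Longrightarrow> copair C K f g \<cdot> (cinl K A B \<cdot> h) = f \<cdot> h"
  by (subst assoc[symmetric]) auto
lemma copair_inr'[simp]: "f \<in> arr C \<Longrightarrow> g \<in> arr C \<Longrightarrow> cod C f = cod C g \<Longrightarrow> dom C f = A \<Longrightarrow> dom C g = B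
  \<Longrightarrow> h \<in> arr C \<Longrightarrow> cod C h = B \<Longrightarrow> copair C K f g \<cdot> (cinr K A B \<cdot> h) = g \<cdot> h"
  by (subst assoc[symmetric]) auto

lemma ex1_eq2: "\<exists>!x. P x \<Longrightarrow> P a \<Longrightarrow> P b \<Longrightarrow> a = b" by blast

lemma cp_ext:
  assumes "h \<in> arr C" "k \<in> arr C" "dom C h = cp K A B" "dom C k = cp K A B" "cod C h = cod C k"
    "A \<in> obj C" "B \<in> obj C"
    "h \<cdot> cinl K A B = k \<cdot> cinl K A B" "h \<cdot> cinr K A B = k \<cdot> cinr K A B"
  shows "h = k"
proof -
  have u: "\<exists>!x. x \<in> hom C (cp K A B) (cod C h) \<and> x \<cdot> cinl K A B = h \<cdot> cinl K A B \<and> x \<cdot> cinr K A B = h \<cdot> cinr K A B"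
    using cpr[of A B] assms unfolding is_coproduct_def hom_def by auto
  have "h \<in> hom C (cp K A B) (cod C h)" "k \<in> hom C (cp K A B) (cod C h)" using assms unfolding hom_def by auto
  then show ?thesis
    by (intro ex1_eq2[OF u]) (simp_all add: assms(8,9))
qed

lemma coprod_map_def'[simp]: "coprod_map C K f g = copair C K (cinl K (cod C f) (cod C g) \<cdot> f) (cinr K (cod C f) (cod C g) \<cdot> g)"
  by (simp add: coprod_map_def)

end

context cc begin

lemma monD: assumes "is_monad C M" shows
 "(\<forall>A\<in>obj C. mo M A \<in> obj C)
   \<and> (\<forall>f\<in>arr C. mm M f \<in> hom C (mo M (dom C f)) (mo M (cod C f)))
   \<and> (\<forall>A\<in>obj C. mm M (idm C A) = idm C (mo M A))
   \<and> (\<forall>f\<in>arr C. \<forall>g\<in>arr C. cod C f = dom C g \<longrightarrow> mm M (comp C g f) = comp C (mm M g) (mm M f))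
   \<and> (\<forall>A\<in>obj C. unit M A \<in> hom C A (mo M A))
   \<and> (\<forall>f\<in>arr C. comp C (unit M (cod C f)) f = comp C (mm M f) (unit M (dom C f)))
   \<and> (\<forall>A\<in>obj C. mult M A \<in> hom C (mo M (mo M A)) (mo M A))
   \<and> (\<forall>f\<in>arr C. comp C (mult M (cod C f)) (mm M (mm M f)) = comp C (mm M f) (mult M (dom C f)))
   \<and> (\<forall>A\<in>obj C. comp C (mult M A) (mm M (unit M A)) = idm C (mo M A))
   \<and> (\<forall>A\<in>obj C. comp C (mult M A) (unit M (mo M A)) = idm C (mo M A))
   \<and> (\<forall>A\<in>obj C. comp C (mult M A) (mm M (mult M A)) = comp C (mult M A) (mult M (mo M A)))"
  using assms unfolding is_monad_def is_endofunctor_def is_nat_trans_def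
  by (elim conjE) (intro conjI; assumption)

lemma mo_obj[simp]: "is_monad C M \<Longrightarrow> A \<in> obj C \<Longrightarrow> mo M A \<in> obj C"
  using monD[of M] by simp
lemma mm_hom: "is_monad C M \<Longrightarrow> f \<in> arr C \<Longrightarrow> mm M f \<in> hom C (mo M (dom C f)) (mo M (cod C f))"
  using monD[of M] by simp
lemma mm_arr[simp]: "is_monad C M \<Longrightarrow> f \<in> arr C \<Longrightarrow> mm M f \<in> arr C"
  using mm_hom[of M f] unfolding hom_def by simp
lemma mm_dom[simp]: "is_monad C M \<Longrightarrow> f \<in> arr C \<Longrightarrow> dom C (mm M f) = mo M (dom C f)"
  using mm_hom[of M f] unfolding hom_def by simp
lemma mm_cod[simp]: "is_monad C M \<Longrightarrow> f \<in> arr C \<Longrightarrow> cod C (mm M f) = mo M (cod C f)"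
  using mm_hom[of M f] unfolding hom_def by simp
lemma mm_id[simp]: "is_monad C M \<Longrightarrow> A \<in> obj C \<Longrightarrow> mm M (idm C A) = idm C (mo M A)"
  using monD[of M] by simp
lemma mm_comp[simp]: "is_monad C M \<Longrightarrow> f \<in> arr C \<Longrightarrow> g \<in> arr C \<Longrightarrow> cod C f = dom C g \<Longrightarrow>
   mm M (g \<cdot> f) = mm M g \<cdot> mm M f"
  using monD[of M, THEN conjunct2, THEN conjunct2, THEN conjunct2, THEN conjunct1, rule_format, of f g] by simp
lemma unit_hom: "is_monad C M \<Longrightarrow> A \<in> obj C \<Longrightarrow> unit M A \<in> hom C A (mo M A)"
  using monD[of M] by simp
lemma unit_arr[simp]: "is_monad C M \<Longrightarrow> A \<in> obj C \<Longrightarrow> unit M A \<in> arr C"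
  using unit_hom[of M A] unfolding hom_def by simp
lemma unit_dom[simp]: "is_monad C M \<Longrightarrow> A \<in> obj C \<Longrightarrow> dom C (unit M A) = A"
  using unit_hom[of M A] unfolding hom_def by simp
lemma unit_cod[simp]: "is_monad C M \<Longrightarrow> A \<in> obj C \<Longrightarrow> cod C (unit M A) = mo M A"
  using unit_hom[of M A] unfolding hom_def by simp
lemma mult_hom: "is_monad C M \<Longrightarrow> A \<in> obj C \<Longrightarrow> mult M A \<in> hom C (mo M (mo M A)) (mo M A)"
  using monD[of M] by simp
lemma mult_arr[simp]: "is_monad C M \<Longrightarrow> A \<in> obj C \<Longrightarrow> mult M A \<in> arr C"
  using mult_hom[of M A] unfolding hom_def by simp
lemma mult_dom[simp]: "is_monad C M \<Longrightarrow> A \<in> obj C \<Longrightarrow> dom C (mult M A) = mo M (mo M A)"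
  using mult_hom[of M A] unfolding hom_def by simp
lemma mult_cod[simp]: "is_monad C M \<Longrightarrow> A \<in> obj C \<Longrightarrow> cod C (mult M A) = mo M A"
  using mult_hom[of M A] unfolding hom_def by simp
lemma unit_nat: "is_monad C M \<Longrightarrow> f \<in> arr C \<Longrightarrow> unit M (cod C f) \<cdot> f = mm M f \<cdot> unit M (dom C f)"
  using monD[of M, THEN conjunct2, THEN conjunct2, THEN conjunct2, THEN conjunct2, THEN conjunct2, THEN conjunct1, rule_format, of f] by simp
lemma mult_nat: "is_monad C M \<Longrightarrow> f \<in> arr C \<Longrightarrow> mult M (cod C f) \<cdot> mm M (mm M f) = mm M f \<cdot> mult M (dom C f)"
  using monD[of M, THEN conjunct2, THEN conjunct2, THEN conjunct2, THEN conjunct2, THEN conjunct2, THEN conjunct2, THEN conjunct2, THEN conjunct1, rule_format, of f] by simp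
lemma mon_l1: "is_monad C M \<Longrightarrow> A \<in> obj C \<Longrightarrow> mult M A \<cdot> mm M (unit M A) = idm C (mo M A)"
  using monD[of M, THEN conjunct2, THEN conjunct2, THEN conjunct2, THEN conjunct2, THEN conjunct2, THEN conjunct2, THEN conjunct2, THEN conjunct2, THEN conjunct1, rule_format, of A] by simp
lemma mon_l2: "is_monad C M \<Longrightarrow> A \<in> obj C \<Longrightarrow> mult M A \<cdot> unit M (mo M A) = idm C (mo M A)"
  using monD[of M, THEN conjunct2, THEN conjunct2, THEN conjunct2, THEN conjunct2, THEN conjunct2, THEN conjunct2, THEN conjunct2, THEN conjunct2, THEN conjunct2, THEN conjunct1, rule_format, of A] by simp
lemma mon_l3: "is_monad C M \<Longrightarrow> A \<in> obj C \<Longrightarrow> mult M A \<cdot> mm M (mult M A) = mult M A \<cdot> mult M (mo M A)"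
  using monD[of M, THEN conjunct2, THEN conjunct2, THEN conjunct2, THEN conjunct2, THEN conjunct2, THEN conjunct2, THEN conjunct2, THEN conjunct2, THEN conjunct2, THEN conjunct2, rule_format, of A] by simp

lemma sf_mo[simp]: "mo (semifree C K M) A = cp K A (mo M A)" by (simp add: semifree_def)
lemma sf_mm[simp]: "mm (semifree C K M) f = coprod_map C K f (mm M f)" by (simp add: semifree_def)
lemma sf_unit[simp]: "unit (semifree C K M) A = cinl K A (mo M A)" by (simp add: semifree_def)
lemma sf_mult[simp]: "mult (semifree C K M) A = copair C K
                (idm C (cp K A (mo M A)))
                (cinr K A (mo M A) \<cdot> (mult M A \<cdot> (mm M (copair C K (unit M A) (idm C (mo M A))))))"
  by (simp add: semifree_def)

lemma sf_endo:
  assumes m: "is_monad C M"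
  shows "is_endofunctor C (mo (semifree C K M)) (mm (semifree C K M))"
  unfolding is_endofunctor_def hom_def
  apply (intro conjI ballI impI CollectI)
  using m apply simp_all
   apply (rule_tac A=A and B="mo M A" in cp_ext; simp)
  apply (rule_tac A="dom C f" and B="mo M (dom C f)" in cp_ext; simp)
  done

lemma ctx:
  assumes e: "a \<cdot> b = c \<cdot> d" and "a \<in> arr C" "b \<in> arr C" "c \<in> arr C" "d \<in> arr C" "h \<in> arr C"
    "cod C b = dom C a" "cod C d = dom C c" "cod C h = dom C b" "dom C d = dom C b"
  shows "a \<cdot> (b \<cdot> h) = c \<cdot> (d \<cdot> h)"
proof -
  have "a \<cdot> (b \<cdot> h) = (a \<cdot> b) \<cdot> h" by (rule assoc[symmetric]) (use assms in auto)
  also have "\<dots> = (c \<cdot> d) \<cdot> h" using e by simp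
  also have "\<dots> = c \<cdot> (d \<cdot> h)" by (rule assoc) (use assms in auto)
  finally show ?thesis .
qed

lemma mon_l1s[simp]: "is_monad C M \<Longrightarrow> A \<in> obj C \<Longrightarrow> mult M A \<cdot> mm M (unit M A) = idm C (mo M A)"
  by (rule mon_l1)
lemma mon_l2s[simp]: "is_monad C M \<Longrightarrow> A \<in> obj C \<Longrightarrow> mult M A \<cdot> unit M (mo M A) = idm C (mo M A)"
  by (rule mon_l2)
lemma mon_l1'[simp]: "is_monad C M \<Longrightarrow> A \<in> obj C \<Longrightarrow> h \<in> arr C \<Longrightarrow> cod C h = mo M A \<Longrightarrow>
  mult M A \<cdot> (mm M (unit M A) \<cdot> h) = h"
  by (subst assoc[symmetric]) auto
lemma mon_l2'[simp]: "is_monad C M \<Longrightarrow> A \<in> obj C \<Longrightarrow> h \<in> arr C \<Longrightarrow> cod C h = mo M A \<Longrightarrow>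
  mult M A \<cdot> (unit M (mo M A) \<cdot> h) = h"
  by (subst assoc[symmetric]) auto
lemma mon_l3s[simp]: "is_monad C M \<Longrightarrow> A \<in> obj C \<Longrightarrow> mult M A \<cdot> mm M (mult M A) = mult M A \<cdot> mult M (mo M A)"
  by (rule mon_l3)
lemma mon_l3'[simp]: "is_monad C M \<Longrightarrow> A \<in> obj C \<Longrightarrow> h \<in> arr C \<Longrightarrow> cod C h = mo M (mo M (mo M A)) \<Longrightarrow>
  mult M A \<cdot> (mm M (mult M A) \<cdot> h) = mult M A \<cdot> (mult M (mo M A) \<cdot> h)"
  by (rule ctx[OF mon_l3]) auto
lemma mult_nat_s: "is_monad C M \<Longrightarrow> f \<in> arr C \<Longrightarrow> cod C f = Y \<Longrightarrow>
   mult M Y \<cdot> mm M (mm M f) = mm M f \<cdot> mult M (dom C f)"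
  using mult_nat by blast
lemma mult_nat': "is_monad C M \<Longrightarrow> f \<in> arr C \<Longrightarrow> cod C f = Y \<Longrightarrow> h \<in> arr C \<Longrightarrow> cod C h = mo M (mo M (dom C f)) \<Longrightarrow>
   mult M Y \<cdot> (mm M (mm M f) \<cdot> h) = mm M f \<cdot> (mult M (dom C f) \<cdot> h)"
  using mult_nat[of M f] by (intro ctx) auto

lemma sf_monad:
  assumes m: "is_monad C M"
  shows "is_monad C (semifree C K M)"
proof -
  define e where "e X = copair C K (unit M X) (idm C (mo M X))" for X
  have e_arr[simp]: "e X \<in> arr C" "dom C (e X) = cp K X (mo M X)" "cod C (e X) = mo M X" if "X \<in> obj C" for X
    using m that unfolding e_def by simp_all
  have e_inl[simp]: "e X \<cdot> cinl K X (mo M X) = unit M X" if "X \<in> obj C" for X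
    using m that unfolding e_def by simp
  have e_inr[simp]: "e X \<cdot> cinr K X (mo M X) = idm C (mo M X)" if "X \<in> obj C" for X
    using m that unfolding e_def by simp
  have e_inl'[simp]: "e X \<cdot> (cinl K X (mo M X) \<cdot> h) = unit M X \<cdot> h" if "X \<in> obj C" "h \<in> arr C" "cod C h = X" for X h
    using m that by (subst assoc[symmetric]) auto
  have e_inr'[simp]: "e X \<cdot> (cinr K X (mo M X) \<cdot> h) = h" if "X \<in> obj C" "h \<in> arr C" "cod C h = mo M X" for X h
    using m that by (subst assoc[symmetric]) auto
  have sfm: "mult (semifree C K M) A = copair C K (idm C (cp K A (mo M A)))
                (cinr K A (mo M A) \<cdot> (mult M A \<cdot> mm M (e A)))" for A
    unfolding e_def by simp
  have e_nat: "e (cod C f) \<cdot> coprod_map C K f (mm M f) = mm M f \<cdot> e (dom C f)" if f: "f \<in> arr C" for f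
    apply (rule cp_ext[where A="dom C f" and B="mo M (dom C f)"])
    using m f by (simp_all add: unit_nat)
  have Me_nat: "mm M (e (cod C f)) \<cdot> mm M (coprod_map C K f (mm M f)) = mm M (mm M f) \<cdot> mm M (e (dom C f))"
    if f: "f \<in> arr C" for f
  proof -
    have "mm M (e (cod C f) \<cdot> coprod_map C K f (mm M f)) = mm M (mm M f \<cdot> e (dom C f))"
      by (simp only: e_nat[OF f])
    thus ?thesis using m f by simp
  qed
  have Me_nat2: "mm M (e (cod C f)) \<cdot> mm M (copair C K (cinl K (cod C f) (mo M (cod C f)) \<cdot> f)
         (cinr K (cod C f) (mo M (cod C f)) \<cdot> mm M f)) = mm M (mm M f) \<cdot> mm M (e (dom C f))"
    if f: "f \<in> arr C" for f
    using Me_nat[OF f] m f by simp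
  have Me_nat': "mm M (e (cod C f)) \<cdot> (mm M (copair C K (cinl K (cod C f) (mo M (cod C f)) \<cdot> f)
         (cinr K (cod C f) (mo M (cod C f)) \<cdot> mm M f)) \<cdot> h) = mm M (mm M f) \<cdot> (mm M (e (dom C f)) \<cdot> h)"
    if f: "f \<in> arr C" and h: "h \<in> arr C" "cod C h = mo M (cp K (dom C f) (mo M (dom C f)))" for f h
    apply (rule ctx)
    using Me_nat[OF f] m f h by simp_all
  have Me_inl: "mm M (e A) \<cdot> mm M (cinl K A (mo M A)) = mm M (unit M A)" if A: "A \<in> obj C" for A
  proof -
    have "mm M (e A) \<cdot> mm M (cinl K A (mo M A)) = mm M (e A \<cdot> cinl K A (mo M A))"
      by (rule mm_comp[symmetric]) (use m A in simp_all)
    also have "\<dots> = mm M (unit M A)" using A by simp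
    finally show ?thesis .
  qed
  let ?ms = "\<lambda>A. copair C K (idm C (cp K A (mo M A)))
                (cinr K A (mo M A) \<cdot> (mult M A \<cdot> mm M (e A)))"
  have key: "e A \<cdot> ?ms A = mult M A \<cdot> (mm M (e A) \<cdot> e (cp K A (mo M A)))" if A: "A \<in> obj C" for A
  proof -
    let ?X = "cp K A (mo M A)"
    have un: "mm M (e A) \<cdot> unit M ?X = unit M (mo M A) \<cdot> e A"
      using unit_nat[OF m e_arr(1)[OF A]] m A by simp
    show ?thesis
      apply (rule cp_ext[where A="?X" and B="mo M ?X"])
      using m A apply (simp_all add: un)
      done
  qed
  have Mkey: "mm M (e A) \<cdot> mm M (?ms A) = mm M (mult M A) \<cdot> (mm M (mm M (e A)) \<cdot> mm M (e (cp K A (mo M A))))"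
    if A: "A \<in> obj C" for A
  proof -
    have "mm M (e A \<cdot> ?ms A) = mm M (mult M A \<cdot> (mm M (e A) \<cdot> e (cp K A (mo M A))))"
      by (simp only: key[OF A])
    thus ?thesis using m A by simp
  qed
  show ?thesis
    unfolding is_monad_def
  proof (intro conjI)
    show "is_endofunctor C (mo (semifree C K M)) (mm (semifree C K M))" by (rule sf_endo[OF m])
    show "is_nat_trans C (\<lambda>A. A) (\<lambda>f. f) (mo (semifree C K M)) (mm (semifree C K M)) (unit (semifree C K M))"
      unfolding is_nat_trans_def hom_def using m by simp
    show "is_nat_trans C (\<lambda>A. mo (semifree C K M) (mo (semifree C K M) A))
     (\<lambda>f. mm (semifree C K M) (mm (semifree C K M) f)) (mo (semifree C K M)) (mm (semifree C K M))
     (mult (semifree C K M))"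
      unfolding is_nat_trans_def hom_def sfm
      apply (intro conjI ballI CollectI)
      using m apply simp_all
      apply (rule_tac A="cp K (dom C f) (mo M (dom C f))" and B="mo M (cp K (dom C f) (mo M (dom C f)))" in cp_ext)
      using m apply (simp_all add: Me_nat' Me_nat2 mult_nat')
      done
    show "\<forall>A\<in>obj C. mult (semifree C K M) A \<cdot> mm (semifree C K M) (unit (semifree C K M) A) =
               idm C (mo (semifree C K M) A)"
      unfolding sfm
      apply (intro ballI)
      apply (rule_tac A="A" and B="mo M A" in cp_ext)
      using m apply (simp_all add: Me_inl)
      done
    show "\<forall>A\<in>obj C. mult (semifree C K M) A \<cdot> unit (semifree C K M) (mo (semifree C K M) A) =
               idm C (mo (semifree C K M) A)"
      unfolding sfm using m by simp
    show "\<forall>A\<in>obj C. mult (semifree C K M) A \<cdot> mm (semifree C K M) (mult (semifree C K M) A) =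
               mult (semifree C K M) A \<cdot> mult (semifree C K M) (mo (semifree C K M) A)"
      unfolding sfm
      apply (intro ballI)
      apply (rule_tac A="cp K (cp K A (mo M A)) (mo M (cp K A (mo M A)))" and B="mo M (cp K (cp K A (mo M A)) (mo M (cp K A (mo M A))))" in cp_ext)
      using m apply (simp_all add: Mkey mult_nat')
      done
  qed
qed


lemma sfmor_simp[simp]: "semifree_mor C K \<sigma> A = coprod_map C K (idm C A) (\<sigma> A)"
  by (simp add: semifree_mor_def)

lemma sf_mor:
  assumes m: "is_monad C M" and t: "is_monad C T" and s: "is_monad_morphism C M T \<sigma>"
  shows "is_monad_morphism C (semifree C K M) (semifree C K T) (semifree_mor C K \<sigma>)"
proof -
  have sD: "(\<forall>A\<in>obj C. \<sigma> A \<in> hom C (mo M A) (mo T A))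
   \<and> (\<forall>f\<in>arr C. \<sigma> (cod C f) \<cdot> mm M f = mm T f \<cdot> \<sigma> (dom C f))
   \<and> (\<forall>A\<in>obj C. \<sigma> A \<cdot> unit M A = unit T A)
   \<and> (\<forall>A\<in>obj C. \<sigma> A \<cdot> mult M A = mult T A \<cdot> (\<sigma> (mo T A) \<cdot> mm M (\<sigma> A)))"
    using s unfolding is_monad_morphism_def is_nat_trans_def by (elim conjE) (intro conjI; assumption)
  have sh: "\<sigma> A \<in> hom C (mo M A) (mo T A)" if "A \<in> obj C" for A using sD that by blast
  have s_arr[simp]: "\<sigma> A \<in> arr C" "dom C (\<sigma> A) = mo M A" "cod C (\<sigma> A) = mo T A" if "A \<in> obj C" for A
    using sh[OF that] unfolding hom_def by simp_all
  have s_nat: "\<sigma> (cod C f) \<cdot> mm M f = mm T f \<cdot> \<sigma> (dom C f)" if "f \<in> arr C" for f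
    using sD[THEN conjunct2, THEN conjunct1, rule_format, OF that] .
  have s_unit[simp]: "\<sigma> A \<cdot> unit M A = unit T A" if "A \<in> obj C" for A
    using sD[THEN conjunct2, THEN conjunct2, THEN conjunct1, rule_format, OF that] .
  have s_mult: "\<sigma> A \<cdot> mult M A = mult T A \<cdot> (\<sigma> (mo T A) \<cdot> mm M (\<sigma> A))" if "A \<in> obj C" for A
    using sD[THEN conjunct2, THEN conjunct2, THEN conjunct2, rule_format, OF that] .
  have s_mult': "\<sigma> A \<cdot> (mult M A \<cdot> h) = mult T A \<cdot> (\<sigma> (mo T A) \<cdot> (mm M (\<sigma> A) \<cdot> h))"
    if A: "A \<in> obj C" and h: "h \<in> arr C" "cod C h = mo M (mo M A)" for A h
  proof -
    have "\<sigma> A \<cdot> (mult M A \<cdot> h) = (\<sigma> A \<cdot> mult M A) \<cdot> h" by (rule assoc[symmetric]) (use m t A h in simp_all)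
    also have "\<dots> = (mult T A \<cdot> (\<sigma> (mo T A) \<cdot> mm M (\<sigma> A))) \<cdot> h" by (simp only: s_mult[OF A])
    also have "\<dots> = mult T A \<cdot> (\<sigma> (mo T A) \<cdot> (mm M (\<sigma> A) \<cdot> h))" using m t A h by simp
    finally show ?thesis .
  qed
  define eM where "eM X = copair C K (unit M X) (idm C (mo M X))" for X
  define eT where "eT X = copair C K (unit T X) (idm C (mo T X))" for X
  have eM_arr[simp]: "eM X \<in> arr C" "dom C (eM X) = cp K X (mo M X)" "cod C (eM X) = mo M X" if "X \<in> obj C" for X
    using m that unfolding eM_def by simp_all
  have eT_arr[simp]: "eT X \<in> arr C" "dom C (eT X) = cp K X (mo T X)" "cod C (eT X) = mo T X" if "X \<in> obj C" for X
    using t that unfolding eT_def by simp_all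
  have eM_inl[simp]: "eM X \<cdot> cinl K X (mo M X) = unit M X" "eM X \<cdot> cinr K X (mo M X) = idm C (mo M X)" if "X \<in> obj C" for X
    using m that unfolding eM_def by simp_all
  have eT_inl[simp]: "eT X \<cdot> cinl K X (mo T X) = unit T X" "eT X \<cdot> cinr K X (mo T X) = idm C (mo T X)" if "X \<in> obj C" for X
    using t that unfolding eT_def by simp_all
  have eT_inr'[simp]: "eT X \<cdot> (cinr K X (mo T X) \<cdot> h) = h" if "X \<in> obj C" "h \<in> arr C" "cod C h = mo T X" for X h
    using t that by (subst assoc[symmetric]) auto
  have sfmM: "mult (semifree C K M) A = copair C K (idm C (cp K A (mo M A)))
                (cinr K A (mo M A) \<cdot> (mult M A \<cdot> mm M (eM A)))" for A
    unfolding eM_def by simp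
  have sfmT: "mult (semifree C K T) A = copair C K (idm C (cp K A (mo T A)))
                (cinr K A (mo T A) \<cdot> (mult T A \<cdot> mm T (eT A)))" for A
    unfolding eT_def by simp
  let ?sm = "\<lambda>A. copair C K (cinl K A (mo T A)) (cinr K A (mo T A) \<cdot> \<sigma> A)"
  have esm: "eT A \<cdot> ?sm A = \<sigma> A \<cdot> eM A" if A: "A \<in> obj C" for A
    apply (rule cp_ext[where A=A and B="mo M A"])
    using m t A by simp_all
  have F2: "mm M (eT A) \<cdot> mm M (?sm A) = mm M (\<sigma> A) \<cdot> mm M (eM A)" if A: "A \<in> obj C" for A
  proof -
    have "mm M (eT A) \<cdot> mm M (?sm A) = mm M (eT A \<cdot> ?sm A)"
      by (rule mm_comp[symmetric]) (use m t A in simp_all)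
    also have "\<dots> = mm M (\<sigma> A \<cdot> eM A)" by (simp only: esm[OF A])
    also have "\<dots> = mm M (\<sigma> A) \<cdot> mm M (eM A)" using m t A by simp
    finally show ?thesis .
  qed
  have F1: "mm T (eT A) \<cdot> (\<sigma> (cp K A (mo T A)) \<cdot> h) = \<sigma> (mo T A) \<cdot> (mm M (eT A) \<cdot> h)"
    if A: "A \<in> obj C" and h: "h \<in> arr C" "cod C h = mo M (cp K A (mo T A))" for A h
  proof -
    have n: "\<sigma> (mo T A) \<cdot> mm M (eT A) = mm T (eT A) \<cdot> \<sigma> (cp K A (mo T A))"
      using s_nat[OF eT_arr(1)[OF A]] A by simp
    show ?thesis
      by (rule ctx[OF n[symmetric]]) (use m t A h in simp_all)
  qed
  show ?thesis
    unfolding is_monad_morphism_def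
  proof (intro conjI)
    show "is_nat_trans C (mo (semifree C K M)) (mm (semifree C K M)) (mo (semifree C K T))
     (mm (semifree C K T)) (semifree_mor C K \<sigma>)"
      unfolding is_nat_trans_def hom_def
      apply (intro conjI ballI CollectI)
      using m t apply simp_all
      apply (rule_tac A="dom C f" and B="mo M (dom C f)" in cp_ext)
      using m t apply (simp_all add: s_nat)
      done
    show "\<forall>A\<in>obj C. semifree_mor C K \<sigma> A \<cdot> unit (semifree C K M) A = unit (semifree C K T) A"
      using m t by simp
    show "\<forall>A\<in>obj C. semifree_mor C K \<sigma> A \<cdot> mult (semifree C K M) A =
        mult (semifree C K T) A \<cdot> (semifree_mor C K \<sigma> (mo (semifree C K T) A) \<cdot>
          mm (semifree C K M) (semifree_mor C K \<sigma> A))"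
      unfolding sfmM sfmT
      apply (intro ballI)
      apply (rule_tac A="cp K A (mo M A)" and B="mo M (cp K A (mo M A))" in cp_ext)
      using m t apply (simp_all add: s_mult' F1 F2)
      done
  qed
qed

lemma sf_id: "is_monad C M \<Longrightarrow> A \<in> obj C \<Longrightarrow> semifree_mor C K (id_mmor C M) A = id_mmor C (semifree C K M) A"
  unfolding id_mmor_def
  apply simp
  apply (rule_tac A="A" and B="mo M A" in cp_ext)
  apply simp_all
  done

lemma sf_comp:
  assumes m: "is_monad C M" and t: "is_monad C T" and u: "is_monad C U"
    and s: "is_monad_morphism C M T \<sigma>" and r: "is_monad_morphism C T U \<tau>" and A: "A \<in> obj C"
  shows "semifree_mor C K (comp_mmor C \<tau> \<sigma>) A = comp_mmor C (semifree_mor C K \<tau>) (semifree_mor C K \<sigma>) A"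
proof -
  have "\<sigma> A \<in> hom C (mo M A) (mo T A)" using s A unfolding is_monad_morphism_def is_nat_trans_def by blast
  then have s1: "\<sigma> A \<in> arr C" "dom C (\<sigma> A) = mo M A" "cod C (\<sigma> A) = mo T A" unfolding hom_def by simp_all
  have "\<tau> A \<in> hom C (mo T A) (mo U A)" using r A unfolding is_monad_morphism_def is_nat_trans_def by blast
  then have t1: "\<tau> A \<in> arr C" "dom C (\<tau> A) = mo T A" "cod C (\<tau> A) = mo U A" unfolding hom_def by simp_all
  show ?thesis
    unfolding comp_mmor_def
    apply simp
    apply (rule cp_ext[where A="A" and B="mo M A"])
    using m t u A s1 t1 by simp_all
qed

end

theorem lemma4:
  fixes C :: "('o,'m) category_data" and K :: "('o,'m) coproduct_choice"
  assumes "is_category C"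
    and "is_coproduct_choice C K"
    and "\<exists>I. is_initial C I"
  shows "(\<forall>M. is_monad C M \<longrightarrow> is_monad C (semifree C K M))
       \<and> (\<forall>M T \<sigma>. is_monad C M \<and> is_monad C T \<and> is_monad_morphism C M T \<sigma> \<longrightarrow>
            is_monad_morphism C (semifree C K M) (semifree C K T) (semifree_mor C K \<sigma>))
       \<and> (\<forall>M. is_monad C M \<longrightarrow>
            (\<forall>A\<in>obj C. semifree_mor C K (id_mmor C M) A = id_mmor C (semifree C K M) A))
       \<and> (\<forall>M T U \<sigma> \<tau>. is_monad C M \<and> is_monad C T \<and> is_monad C U
            \<and> is_monad_morphism C M T \<sigma> \<and> is_monad_morphism C T U \<tau> \<longrightarrow>
            (\<forall>A\<in>obj C. semifree_mor C K (comp_mmor C \<tau> \<sigma>) A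
                        = comp_mmor C (semifree_mor C K \<tau>) (semifree_mor C K \<sigma>) A))"
proof -
  interpret cc C K using assms(1,2) by unfold_locales
  show ?thesis
  proof (intro conjI allI impI ballI)
    fix M assume "is_monad C M"
    then show "is_monad C (semifree C K M)" by (rule sf_monad)
  next
    fix M T \<sigma> assume h: "is_monad C M \<and> is_monad C T \<and> is_monad_morphism C M T \<sigma>"
    then show "is_monad_morphism C (semifree C K M) (semifree C K T) (semifree_mor C K \<sigma>)"
      using sf_mor by blast
  next
    fix M A assume "is_monad C M" "A \<in> obj C"
    then show "semifree_mor C K (id_mmor C M) A = id_mmor C (semifree C K M) A" by (rule sf_id)
  next
    fix M T U \<sigma> \<tau> A
    assume h: "is_monad C M \<and> is_monad C T \<and> is_monad C U \<and> is_monad_morphism C M T \<sigma> \<and> is_monad_morphism C T U \<tau>"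
      and A: "A \<in> obj C"
    then show "semifree_mor C K (comp_mmor C \<tau> \<sigma>) A = comp_mmor C (semifree_mor C K \<tau>) (semifree_mor C K \<sigma>) A"
      using sf_comp by blast
  qed
qed

end
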